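(* For every planar forest $F$, $\Delta(F)=\sum_{c\in \mathrm{Adm}^l(F)}P^c(F)\otimes R^c(F)+F\otimes 1+1\otimes F$.
   Context: Planar rooted trees have their children linearly ordered left to right; a planar forest is a finite, possibly empty, sequence of planar rooted trees ($1$ = empty forest); $\mathcal{H}$ is the free associative unital algebra over a field $K$ on planar rooted trees, with basis the planar forests and product concatenation. $B^+(F)$ is the tree obtained by grafting the trees of the forest $F$ (in order) on a new common root; $\varepsilon(F)=\delta_{F,1}$. $\Delta:\mathcal{H}\to\mathcal{H}\otimes\mathcal{H}$ is the unique linear map with $\Delta(1)=1\otimes1$, $\Delta(xy)=(x\otimes1)\Delta(y)+\Delta(x)(1\otimes y)-x\otimes y$ and $\Delta(B^+(x))=B^+(x)\otimes 1+(\mathrm{Id}\otimes B^+)\Delta(x)$ for all $x,y\in\mathcal{H}$. Orders on the vertices of a nonempty forest $F=t_1\cdots t_n$: $s\geq_{high}s'$ iff $s'=s$ or $s'$ is an ancestor of $s$. If $s,s'$ are incomparable for $\geq_{high}$, then $s\geq_{left}s'$ iff either $s\in t_i$, $s'\in t_j$ with $i<j$, or $s,s'$ lie in the same $t_i$ and $s\geq_{left}s'$ in the forest obtained from $t_i$ by deleting its root (recursive definition). $s\geq_{h,l}s'$ iff $s\geq_{high}s'$ or $s\geq_{left}s'$; this is a total order. Admissible cuts: add to each tree of $F$ an imaginary edge below its root. An admissible cut $c$ is a nonempty set of edges (real edges or imaginary root-edges) such that every path from the base of a tree to a leaf contains at most one edge of $c$, and which is not the total cut (consisting of all root-edges). $P^c(F)$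 is the planar forest formed by the vertices lying above an edge of $c$ (i.e. whose path to the base contains an edge of $c$), and $R^c(F)$ the planar forest formed by the remaining vertices, with induced edges and left-right orders. Writing the vertices of $F$ as $s_1\geq_{h,l}\cdots\geq_{h,l}s_n$, an admissible cut $c$ is left-admissible if there is $k$ such that the vertices of $P^c(F)$ are exactly $s_1,\dots,s_k$; $\mathrm{Adm}^l(F)$ is the set of left-admissible cuts. *)

theory Defs
  imports Main "HOL-Library.Poly_Mapping" "HOL-Library.Sublist"
begin

text \<open>A planar rooted tree is a root together with the (left-to-right ordered)
  list of its subtrees; a planar forest is a list of planar rooted trees.
  The empty forest is the unit 1.\<close>

datatype ptree = Node "ptree list"

type_synonym forest = "ptree list"

definition Bplus_f :: "forest \<Rightarrow> forest" where
  "Bplus_f F = [Node F]"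

text \<open>H: finitely supported K-linear combinations of planar forests.
  H tensor H: finitely supported K-linear combinations of pairs of forests
  (the pair (F,G) standing for F tensor G).\<close>

type_synonym 'k H = "forest \<Rightarrow>\<^sub>0 'k"
type_synonym 'k HH = "(forest \<times> forest) \<Rightarrow>\<^sub>0 'k"

definition cmul :: "'k::field \<Rightarrow> ('a \<Rightarrow>\<^sub>0 'k) \<Rightarrow> ('a \<Rightarrow>\<^sub>0 'k)" where
  "cmul c x = Poly_Mapping.map (\<lambda>a. c * a) x"

definition lin :: "('a \<Rightarrow> ('b \<Rightarrow>\<^sub>0 'k::field)) \<Rightarrow> ('a \<Rightarrow>\<^sub>0 'k) \<Rightarrow> ('b \<Rightarrow>\<^sub>0 'k)" where
  "lin f x = (\<Sum>a \<in> Poly_Mapping.keys x. cmul (Poly_Mapping.lookup x a) (f a))"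

definition basis :: "'a \<Rightarrow> ('a \<Rightarrow>\<^sub>0 'k::field)" where
  "basis a = Poly_Mapping.single a 1"

definition hone :: "'k::field H" where
  "hone = basis []"

definition hmult :: "'k::field H \<Rightarrow> 'k H \<Rightarrow> 'k H" where
  "hmult x y = lin (\<lambda>F. lin (\<lambda>G. basis (F @ G)) y) x"

definition Bplus :: "'k::field H \<Rightarrow> 'k H" where
  "Bplus x = lin (\<lambda>F. basis (Bplus_f F)) x"

definition tens :: "'k::field H \<Rightarrow> 'k H \<Rightarrow> 'k HH" where
  "tens x y = lin (\<lambda>F. lin (\<lambda>G. basis (F, G)) y) x"

definition tmult :: "'k::field HH \<Rightarrow> 'k HH \<Rightarrow> 'k HH" where
  "tmult u v = lin (\<lambda>(F1, G1). lin (\<lambda>(F2, G2). basis (F1 @ F2, G1 @ G2)) v) u"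

definition id_Bplus :: "'k::field HH \<Rightarrow> 'k HH" where
  "id_Bplus u = lin (\<lambda>(F, G). basis (F, Bplus_f G)) u"

text \<open>A linear map Delta: H \<rightarrow> H tensor H is given by its values D on the basis
  of forests, Delta = lin D. It is the coproduct of the statement iff it
  satisfies the three defining identities.\<close>
definition is_coproduct :: "(forest \<Rightarrow> 'k::field HH) \<Rightarrow> bool" where
  "is_coproduct D \<longleftrightarrow>
     lin D hone = tens hone hone \<and>
     (\<forall>x y. lin D (hmult x y) =
        tmult (tens x hone) (lin D y) + tmult (lin D x) (tens hone y) - tens x y) \<and>
     (\<forall>x. lin D (Bplus x) = tens (Bplus x) hone + id_Bplus (lin D x))"

text \<open>Vertices of a forest are addressed by paths: [i] is the root of the i-th
  tree (counting from 0), and p @ [j] is the j-th child of vertex p.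
  The edge (real or imaginary) just below a vertex v is identified with v,
  so a set of edges is a set of vertices.\<close>

fun is_vertex :: "forest \<Rightarrow> nat list \<Rightarrow> bool" where
  "is_vertex ts [] = False"
| "is_vertex ts (i # p) =
     (i < length ts \<and> (case ts ! i of Node cs \<Rightarrow> p = [] \<or> is_vertex cs p))"

definition vertices :: "forest \<Rightarrow> nat list set" where
  "vertices F = {p. is_vertex F p}"

definition geq_high :: "nat list \<Rightarrow> nat list \<Rightarrow> bool" where
  "geq_high s s' \<longleftrightarrow> prefix s' s"

text \<open>The recursive left order (used only for high-incomparable vertices):
  compare the indices of the trees containing the vertices; if equal, recurse
  in the forest obtained by deleting the common root.\<close>
fun geq_left :: "nat list \<Rightarrow> nat list \<Rightarrow> bool" where
  "geq_left (i # s) (j # s') = (i < j \<or> (i = j \<and> geq_left s s'))"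
| "geq_left _ _ = False"

definition geq_hl :: "nat list \<Rightarrow> nat list \<Rightarrow> bool" where
  "geq_hl s s' \<longleftrightarrow> geq_high s s' \<or>
     (\<not> geq_high s s' \<and> \<not> geq_high s' s \<and> geq_left s s')"

definition roots :: "forest \<Rightarrow> nat list set" where
  "roots F = {[i] | i. i < length F}"

text \<open>Admissible cuts: nonempty sets of edges, at most one on each
  base-to-leaf path (i.e. pairwise not in ancestor relation), not the total cut.\<close>
definition admissible :: "forest \<Rightarrow> nat list set \<Rightarrow> bool" where
  "admissible F c \<longleftrightarrow> c \<subseteq> vertices F \<and> c \<noteq> {} \<and>
     (\<forall>u\<in>c. \<forall>v\<in>c. prefix u v \<longrightarrow> u = v) \<and> c \<noteq> roots F"

definition above :: "forest \<Rightarrow> nat list set \<Rightarrow> nat list set" where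
  "above F c = {v \<in> vertices F. \<exists>u\<in>c. prefix u v}"

text \<open>Restriction of a forest to a set S of vertices: vertices outside S are
  deleted; for S closed upwards or closed downwards this is the forest formed by
  the vertices of S with induced edges and left-right orders.
  restr S p i ts: ts is the list of trees whose roots have addresses
  p @ [i], p @ [i+1], ...\<close>
fun restr :: "(nat list \<Rightarrow> bool) \<Rightarrow> nat list \<Rightarrow> nat \<Rightarrow> forest \<Rightarrow> forest" where
  "restr S p i [] = []"
| "restr S p i (Node cs # ts) =
     (if S (p @ [i]) then [Node (restr S (p @ [i]) 0 cs)] else restr S (p @ [i]) 0 cs)
     @ restr S p (Suc i) ts"

definition Pc :: "forest \<Rightarrow> nat list set \<Rightarrow> forest" where
  "Pc F c = restr (\<lambda>v. v \<in> above F c) [] 0 F"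

definition Rc :: "forest \<Rightarrow> nat list set \<Rightarrow> forest" where
  "Rc F c = restr (\<lambda>v. v \<notin> above F c) [] 0 F"

definition left_admissible :: "forest \<Rightarrow> nat list set \<Rightarrow> bool" where
  "left_admissible F c \<longleftrightarrow> admissible F c \<and>
     (\<exists>ss k. distinct ss \<and> set ss = vertices F \<and> sorted_wrt geq_hl ss \<and>
            above F c = set (take k ss))"

definition Adm_l :: "forest \<Rightarrow> nat list set set" where
  "Adm_l F = {c. left_admissible F c}"

end

theory Submission
  imports Defs
begin


lemma lookup_cmul: "Poly_Mapping.lookup (cmul c x) a = c * Poly_Mapping.lookup x a"
  by (simp add: cmul_def Poly_Mapping.map.rep_eq when_def)

lemma cmul_add_left: "cmul (c+d) x = cmul c x + cmul d x"
  by (rule poly_mapping_eqI) (simp add: lookup_cmul lookup_add algebra_simps)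
lemma cmul_diff_left: "cmul (c-d) x = cmul c x - cmul d x"
  by (rule poly_mapping_eqI) (simp add: lookup_cmul lookup_minus algebra_simps)
lemma cmul_zero_left[simp]: "cmul 0 x = 0"
  by (rule poly_mapping_eqI) (simp add: lookup_cmul)
lemma cmul_one[simp]: "cmul 1 x = x"
  by (rule poly_mapping_eqI) (simp add: lookup_cmul)

lemma lin_superset: "finite S \<Longrightarrow> Poly_Mapping.keys x \<subseteq> S \<Longrightarrow>
   lin f x = (\<Sum>a\<in>S. cmul (Poly_Mapping.lookup x a) (f a))"
  unfolding lin_def by (rule sum.mono_neutral_left) (auto simp: in_keys_iff)

lemma lin_add: "lin f (x + y) = lin f x + lin f y"
proof -
  let ?S = "Poly_Mapping.keys x \<union> Poly_Mapping.keys y"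
  have k: "Poly_Mapping.keys (x+y) \<subseteq> ?S"
    by (auto simp: in_keys_iff lookup_add)
  show ?thesis
    by (subst (1 2 3) lin_superset[of ?S]) (auto simp: k lookup_add cmul_add_left sum.distrib)
qed

lemma lin_diff: "lin f (x - y) = lin f x - lin f y"
proof -
  let ?S = "Poly_Mapping.keys x \<union> Poly_Mapping.keys y"
  have k: "Poly_Mapping.keys (x-y) \<subseteq> ?S"
    by (auto simp: in_keys_iff lookup_minus)
  show ?thesis
    by (subst (1 2 3) lin_superset[of ?S]) (auto simp: k lookup_minus cmul_diff_left sum_subtractf)
qed

lemma lin_zero[simp]: "lin f 0 = 0"
  by (simp add: lin_def)

lemma lin_basis[simp]: "lin f (basis a) = f a"
  by (simp add: lin_def basis_def)

lemma lin_sum_list: "lin f (sum_list xs) = sum_list (map (lin f) xs)"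
  by (induction xs) (auto simp: lin_add)

fun splits :: "forest \<Rightarrow> (forest \<times> forest) list" where
  "splits [] = [([],[])]"
| "splits (Node cs # ts) = map (\<lambda>(P,R). (P, Node R # ts)) (splits cs)
      @ map (\<lambda>(P,R). (Node cs # P, R)) (splits ts)"

definition Phi :: "forest \<Rightarrow> 'k::field HH" where
  "Phi F = sum_list (map basis (splits F))"

lemma tens_basis[simp]: "tens (basis a) (basis b) = basis (a,b)"
  by (simp add: tens_def)

lemma hmult_basis[simp]: "hmult (basis a) (basis b) = basis (a@b)"
  by (simp add: hmult_def)

lemma Bplus_basis[simp]: "Bplus (basis a) = basis [Node a]"
  by (simp add: Bplus_def Bplus_f_def)

lemma tmult_add_left: "tmult (x + y) v = tmult x v + tmult y v"
  by (simp add: tmult_def lin_add)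

lemma tmult_basis_left: "tmult (basis (a,b)) v = lin (\<lambda>(F2,G2). basis (a@F2, b@G2)) v"
  by (simp add: tmult_def)

lemma tmult_basis_right: "tmult u (basis (a,b)) = lin (\<lambda>(F1,G1). basis (F1@a, G1@b)) u"
  unfolding tmult_def by (simp add: case_prod_beta)

lemma lin_basis_list: "lin f (sum_list (map basis ps)) = sum_list (map f ps)"
  by (simp add: lin_sum_list o_def)

lemma D_eq:
  fixes D :: "forest \<Rightarrow> 'k::field HH"
  assumes D: "is_coproduct D"
  shows "lin D (basis F) = Phi F"
proof (induction F rule: splits.induct)
  case 1
  then show ?case using D by (simp add: is_coproduct_def hone_def Phi_def)
next
  case (2 cs ts)
  have m: "lin D (hmult x y) =
        tmult (tens x hone) (lin D y) + tmult (lin D x) (tens hone y) - tens x y" for x y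
    using D by (simp add: is_coproduct_def)
  have b: "lin D (Bplus x) = tens (Bplus x) hone + id_Bplus (lin D x)" for x
    using D by (simp add: is_coproduct_def)
  have t: "lin D (basis [Node cs]) = basis ([Node cs], []) + 
      sum_list (map (\<lambda>(P,R). basis (P, [Node R])) (splits cs))"
    using b[of "basis cs"] 2(1) by (simp add: hone_def Phi_def id_Bplus_def lin_basis_list Bplus_f_def)
  have "lin D (basis (Node cs # ts)) = lin D (hmult (basis [Node cs]) (basis ts))" by simp
  also have "\<dots> = tmult (basis ([Node cs],[])) (Phi ts) + tmult (lin D (basis [Node cs])) (basis ([],ts))
     - basis ([Node cs], ts)"
    using 2(2) by (subst m) (simp add: hone_def)
  also have "\<dots> = Phi (Node cs # ts)"
    unfolding t tmult_add_left
    by (simp add: tmult_basis_left tmult_basis_right Phi_def lin_basis_list lin_sum_list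
          o_def case_prod_beta)
  finally show ?case .
qed



fun post :: "nat list \<Rightarrow> nat \<Rightarrow> forest \<Rightarrow> nat list list" where
  "post p i [] = []"
| "post p i (Node cs # ts) = post (p@[i]) 0 cs @ [p@[i]] @ post p (Suc i) ts"

lemma len_post: "length (post p i F) = length (post p' i' F)"
proof (induction p i F arbitrary: p' i' rule: post.induct)
  case (2 p i cs ts)
  then show ?case by (simp, metis)
qed simp

lemma len_splits: "length (splits F) = Suc (length (post p i F))"
proof (induction p i F rule: post.induct)
  case (2 p i cs ts)
  then show ?case by simp
qed simp

lemma splits_0: "splits F ! 0 = ([], F)"
proof (induction F rule: splits.induct)
  case (2 cs ts)
  have "splits cs \<noteq> []" using len_splits[of cs "[]" 0] by auto
  then show ?case using 2 by (simp add: nth_append case_prod_beta)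
qed simp

lemma splits_last: "splits F ! (length (post p i F)) = (F, [])"
proof (induction p i F rule: post.induct)
  case (2 p i cs ts)
  have l: "length (splits cs) = Suc (length (post (p@[i]) 0 cs))" by (rule len_splits)
  have l2: "length (splits ts) = Suc (length (post p (Suc i) ts))" by (rule len_splits)
  show ?case using 2 l l2 by (simp add: nth_append case_prod_beta)
qed simp

lemma post_shape: "v \<in> set (post p i F) \<Longrightarrow> \<exists>j q. v = p @ j # q \<and> i \<le> j"
proof (induction p i F rule: post.induct)
  case (2 p i cs ts)
  from 2(3) consider "v \<in> set (post (p@[i]) 0 cs)" | "v = p@[i]" | "v \<in> set (post p (Suc i) ts)"
    by auto
  then show ?case
  proof cases
    case 1
    then obtain j q where "v = (p@[i]) @ j # q" using 2(1) by blast
    then show ?thesis by (intro exI[of _ i] exI[of _ "j#q"]) simp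
  next
    case 2
    then show ?thesis by simp
  next
    case 3
    then show ?thesis using 2(2) by (meson Suc_leD)
  qed
qed simp

lemma post_split_facts:
  shows "p@[i] \<notin> set (post (p@[i]) 0 cs)" "p@[i] \<notin> set (post p (Suc i) ts)"
    "set (post (p@[i]) 0 cs) \<inter> set (post p (Suc i) ts) = {}"
proof -
  show "p@[i] \<notin> set (post (p@[i]) 0 cs)" using post_shape[of _ "p@[i]" 0 cs] by fastforce
  show "p@[i] \<notin> set (post p (Suc i) ts)" using post_shape[of _ p "Suc i" ts] by fastforce
  show "set (post (p@[i]) 0 cs) \<inter> set (post p (Suc i) ts) = {}"
    using post_shape[of _ "p@[i]" 0 cs] post_shape[of _ p "Suc i" ts]
    by fastforce
qed

lemma distinct_post: "distinct (post p i F)"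
proof (induction p i F rule: post.induct)
  case (2 p i cs ts)
  then show ?case using post_split_facts(1)[of p i cs] post_split_facts(2)[of p i ts] post_split_facts(3)[of p i cs ts] by auto
qed simp



lemma restr_PR:
  "k \<le> length (post p i F) \<Longrightarrow>
   ((\<forall>v\<in>set (post p i F). S v = (v \<in> set (take k (post p i F)))) \<longrightarrow> restr S p i F = fst (splits F ! k)) \<and>
   ((\<forall>v\<in>set (post p i F). S v = (v \<notin> set (take k (post p i F)))) \<longrightarrow> restr S p i F = snd (splits F ! k))"
proof (induction p i F arbitrary: S k rule: post.induct)
  case (1 p i)
  then show ?case by simp
next
  case (2 p i cs ts)
  define L1 where "L1 = post (p@[i]) 0 cs"
  define L2 where "L2 = post p (Suc i) ts"
  define m where "m = length L1"
  have ls: "length (splits cs) = Suc m" unfolding m_def L1_def by (rule len_splits)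
  have ls2: "length (splits ts) = Suc (length L2)" unfolding L2_def by (rule len_splits)
  have r1: "p@[i] \<notin> set L1" and r2: "p@[i] \<notin> set L2" and d: "set L1 \<inter> set L2 = {}"
    unfolding L1_def L2_def using post_split_facts by auto
  have pe: "post p i (Node cs # ts) = L1 @ [p@[i]] @ L2" unfolding L1_def L2_def by simp
  have IH1: "restr S (p@[i]) 0 cs = fst (splits cs ! k')"
    if "k' \<le> m" "\<forall>v\<in>set L1. S v = (v \<in> set (take k' L1))" for k'
    using 2(1)[of k' S] that unfolding L1_def m_def by blast
  have IH1': "restr S (p@[i]) 0 cs = snd (splits cs ! k')"
    if "k' \<le> m" "\<forall>v\<in>set L1. S v = (v \<notin> set (take k' L1))" for k'
    using 2(1)[of k' S] that unfolding L1_def m_def by blast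
  have IH2: "restr S p (Suc i) ts = fst (splits ts ! k')"
    if "k' \<le> length L2" "\<forall>v\<in>set L2. S v = (v \<in> set (take k' L2))" for k'
    using 2(2)[of k' S] that unfolding L2_def by blast
  have IH2': "restr S p (Suc i) ts = snd (splits ts ! k')"
    if "k' \<le> length L2" "\<forall>v\<in>set L2. S v = (v \<notin> set (take k' L2))" for k'
    using 2(2)[of k' S] that unfolding L2_def by blast
  have cs_m: "splits cs ! m = (cs, [])" unfolding m_def L1_def by (rule splits_last)
  show ?case
  proof (cases "k \<le> m")
    case True
    have tk: "take k (post p i (Node cs # ts)) = take k L1"
      unfolding pe using True m_def by simp
    have sk: "splits (Node cs # ts) ! k = (fst (splits cs ! k), Node (snd (splits cs ! k)) # ts)"
      using True ls by (simp add: nth_append case_prod_beta)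
    have sub: "set (take k L1) \<subseteq> set L1" by (rule set_take_subset)
    show ?thesis
    proof (intro conjI impI)
      assume H: "\<forall>v\<in>set (post p i (Node cs # ts)). S v = (v \<in> set (take k (post p i (Node cs # ts))))"
      have a: "restr S (p@[i]) 0 cs = fst (splits cs ! k)"
        using IH1[OF True] H[unfolded tk, unfolded pe] by auto
      have b: "restr S p (Suc i) ts = []"
        using IH2[of 0] H[unfolded tk, unfolded pe] sub d by (auto simp: splits_0)
      have c: "\<not> S (p@[i])" using H[unfolded tk, unfolded pe] sub r1 by auto
      show "restr S p i (Node cs # ts) = fst (splits (Node cs # ts) ! k)"
        using a b c sk by simp
    next
      assume H: "\<forall>v\<in>set (post p i (Node cs # ts)). S v = (v \<notin> set (take k (post p i (Node cs # ts))))"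
      have a: "restr S (p@[i]) 0 cs = snd (splits cs ! k)"
        using IH1'[OF True] H[unfolded tk, unfolded pe] by auto
      have b: "restr S p (Suc i) ts = ts"
        using IH2'[of 0] H[unfolded tk, unfolded pe] sub d by (auto simp: splits_0)
      have c: "S (p@[i])" using H[unfolded tk, unfolded pe] sub r1 by auto
      show "restr S p i (Node cs # ts) = snd (splits (Node cs # ts) ! k)"
        using a b c sk by simp
    qed
  next
    case False
    then obtain l where kl: "k = Suc m + l" by (metis add_Suc less_imp_Suc_add not_le)
    have ll: "l \<le> length L2" using 2(3) kl unfolding pe m_def by simp
    have tk: "take k (post p i (Node cs # ts)) = L1 @ [p@[i]] @ take l L2"
      unfolding pe using kl m_def by simp
    have sk: "splits (Node cs # ts) ! k = (Node cs # fst (splits ts ! l), snd (splits ts ! l))"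
      using kl ls ls2 ll by (simp add: nth_append case_prod_beta)
    have sub: "set (take l L2) \<subseteq> set L2" by (rule set_take_subset)
    have tm: "take m L1 = L1" unfolding m_def by simp
    show ?thesis
    proof (intro conjI impI)
      assume H: "\<forall>v\<in>set (post p i (Node cs # ts)). S v = (v \<in> set (take k (post p i (Node cs # ts))))"
      have a: "restr S (p@[i]) 0 cs = cs"
        using IH1[of m] H[unfolded tk, unfolded pe] cs_m tm by auto
      have b: "restr S p (Suc i) ts = fst (splits ts ! l)"
        using IH2[OF ll] H[unfolded tk, unfolded pe] sub d r2 by auto
      have c: "S (p@[i])" using H[unfolded tk, unfolded pe] by auto
      show "restr S p i (Node cs # ts) = fst (splits (Node cs # ts) ! k)"
        using a b c sk by simp
    next
      assume H: "\<forall>v\<in>set (post p i (Node cs # ts)). S v = (v \<notin> set (take k (post p i (Node cs # ts))))"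
      have a: "restr S (p@[i]) 0 cs = []"
        using IH1'[of m] H[unfolded tk, unfolded pe] cs_m tm by auto
      have b: "restr S p (Suc i) ts = snd (splits ts ! l)"
        using IH2'[OF ll] H[unfolded tk, unfolded pe] sub d r2 by auto
      have c: "\<not> S (p@[i])" using H[unfolded tk, unfolded pe] by auto
      show "restr S p i (Node cs # ts) = snd (splits (Node cs # ts) ! k)"
        using a b c sk by simp
    qed
  qed
qed



lemma geq_left_app: "geq_left (p @ s) (p @ s') = geq_left s s'"
  by (induction p) auto

lemma geq_left_asym: "geq_left s s' \<Longrightarrow> \<not> geq_left s' s"
  by (induction s s' rule: geq_left.induct) auto

lemma geq_hl_antisym: "geq_hl s s' \<Longrightarrow> geq_hl s' s \<Longrightarrow> s = s'"
  unfolding geq_hl_def geq_high_def using geq_left_asym prefix_order.antisym by blast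

lemma sorted_post: "sorted_wrt geq_hl (post p i F)"
proof (induction p i F rule: post.induct)
  case (2 p i cs ts)
  have x1: "geq_hl x (p@[i])" if "x \<in> set (post (p@[i]) 0 cs)" for x
    using post_shape[OF that] by (auto simp: geq_hl_def geq_high_def)
  have x2: "geq_hl (p@[i]) y" if yy: "y \<in> set (post p (Suc i) ts)" for y
  proof -
    obtain j q where "y = p @ j # q" "Suc i \<le> j" using post_shape[OF yy] by blast
    then show ?thesis
      by (auto simp: geq_hl_def geq_high_def geq_left_app[of p "[i]", simplified])
  qed
  have x3: "geq_hl x y" if xx: "x \<in> set (post (p@[i]) 0 cs)" and yy: "y \<in> set (post p (Suc i) ts)" for x y
  proof -
    obtain j q where "y = p @ j # q" "Suc i \<le> j" using post_shape[OF yy] by blast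
    moreover obtain j' q' where "x = p @ i # j' # q'" using post_shape[OF xx] by auto
    ultimately show ?thesis
      by (auto simp: geq_hl_def geq_high_def geq_left_app)
  qed
  show ?case using 2 x1 x2 x3 by (auto simp: sorted_wrt_append)
qed simp

lemma sorted_unique:
  assumes "distinct xs" "distinct ys" "set xs = set ys" "sorted_wrt R xs" "sorted_wrt R ys"
    "\<And>a b. R a b \<Longrightarrow> R b a \<Longrightarrow> a = b"
  shows "xs = ys"
  using assms(1-5)
proof (induction xs arbitrary: ys)
  case Nil
  then show ?case by simp
next
  case (Cons x xs)
  then obtain y ys' where ys: "ys = y # ys'" by (cases ys) auto
  have "x = y"
  proof (rule ccontr)
    assume "x \<noteq> y"
    then have "y \<in> set xs" "x \<in> set ys'" using Cons.prems(3) ys by auto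
    then have "R x y" "R y x" using Cons.prems(4,5) ys by auto
    then show False using assms(6) \<open>x \<noteq> y\<close> by blast
  qed
  moreover have "set xs = set ys'"
    using Cons.prems(1-3) ys \<open>x = y\<close> by (metis distinct.simps(2) list.set(2) set_remove1_eq remove1.simps(2))
  moreover have "xs = ys'"
    using Cons.IH[of ys'] Cons.prems ys \<open>x = y\<close> calculation by auto
  ultimately show ?case using ys by simp
qed

lemma mem_post: "v \<in> set (post p i F) \<longleftrightarrow> (\<exists>j q. v = p @ (i + j) # q \<and> is_vertex F (j # q))"
proof (induction p i F arbitrary: v rule: post.induct)
  case (1 p i)
  then show ?case by simp
next
  case (2 p i cs ts)
  show ?case
  proof
    assume "v \<in> set (post p i (Node cs # ts))"
    then consider "v \<in> set (post (p@[i]) 0 cs)" | "v = p@[i]" | "v \<in> set (post p (Suc i) ts)"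
      by auto
    then show "\<exists>j q. v = p @ (i + j) # q \<and> is_vertex (Node cs # ts) (j # q)"
    proof cases
      case 1
      then obtain j q where "v = (p@[i]) @ (0 + j) # q" "is_vertex cs (j # q)" using 2(1) by blast
      then show ?thesis by (intro exI[of _ 0] exI[of _ "j#q"]) simp
    next
      case 2
      then show ?thesis by (intro exI[of _ 0] exI[of _ "[]"]) simp
    next
      case 3
      then obtain j q where "v = p @ (Suc i + j) # q" "is_vertex ts (j # q)" using 2(2) by blast
      then show ?thesis by (intro exI[of _ "Suc j"] exI[of _ q]) simp
    qed
  next
    assume "\<exists>j q. v = p @ (i + j) # q \<and> is_vertex (Node cs # ts) (j # q)"
    then obtain j q where v: "v = p @ (i + j) # q" and iv: "is_vertex (Node cs # ts) (j # q)" by blast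
    show "v \<in> set (post p i (Node cs # ts))"
    proof (cases j)
      case 0
      show ?thesis
      proof (cases q)
        case Nil
        then show ?thesis using v 0 by simp
      next
        case (Cons j' q')
        then have "is_vertex cs (j' # q')" using iv 0 by simp
        then have "v \<in> set (post (p@[i]) 0 cs)" using 2(1) v 0 Cons by auto
        then show ?thesis by simp
      qed
    next
      case (Suc j')
      then have "is_vertex ts (j' # q)" using iv by simp
      then have "v \<in> set (post p (Suc i) ts)" using 2(2) v Suc by auto
      then show ?thesis by simp
    qed
  qed
qed

definition V :: "forest \<Rightarrow> nat list list" where "V F = post [] 0 F"

lemma vertices_V: "vertices F = set (V F)"
proof -
  have "is_vertex F v \<longleftrightarrow> v \<in> set (V F)" for v
    unfolding V_def mem_post by (cases v) auto
  then show ?thesis unfolding vertices_def by auto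
qed



definition cutA :: "nat list set \<Rightarrow> nat list set" where
  "cutA A = {v \<in> A. \<forall>u\<in>A. prefix u v \<longrightarrow> u = v}"

lemma distinct_V: "distinct (V F)" unfolding V_def by (rule distinct_post)
lemma sorted_V: "sorted_wrt geq_hl (V F)" unfolding V_def by (rule sorted_post)

lemma closed_take:
  assumes v: "v \<in> set (take k (V F))" and pw: "prefix v w" and w: "w \<in> set (V F)"
  shows "w \<in> set (take k (V F))"
proof -
  let ?xs = "V F"
  obtain b where b: "b < length (take k ?xs)" "take k ?xs ! b = v" using v by (metis in_set_conv_nth)
  then have b2: "b < k" "b < length ?xs" "?xs ! b = v" by auto
  obtain a where a: "a < length ?xs" "?xs ! a = w" using w by (metis in_set_conv_nth)
  show ?thesis
  proof (cases "a < k")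
    case True
    then show ?thesis using a by (metis in_set_conv_nth length_take min_less_iff_conj nth_take)
  next
    case False
    then have "b < a" using b2 by simp
    then have "geq_hl v w" using sorted_V[of F] a b2 by (auto simp: sorted_wrt_iff_nth_less)
    then have "v = w" using pw unfolding geq_hl_def geq_high_def by (auto dest: prefix_order.antisym)
    then have "a = b" using distinct_V[of F] a b2 by (metis nth_eq_iff_index_eq)
    then show ?thesis using \<open>b < a\<close> by simp
  qed
qed

lemma above_cut:
  assumes sub: "A \<subseteq> vertices F"
    and cl: "\<And>v w. v \<in> A \<Longrightarrow> prefix v w \<Longrightarrow> w \<in> vertices F \<Longrightarrow> w \<in> A"
  shows "above F (cutA A) = A"
proof
  show "above F (cutA A) \<subseteq> A" unfolding above_def cutA_def using cl by auto
next
  show "A \<subseteq> above F (cutA A)"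
  proof
    fix v assume v: "v \<in> A"
    define m where "m = (LEAST m. take m v \<in> A)"
    have ex: "take (length v) v \<in> A" using v by simp
    have um: "take m v \<in> A" unfolding m_def by (rule LeastI[where P="\<lambda>m. take m v \<in> A", OF ex])
    have ml: "m \<le> length v" unfolding m_def by (rule Least_le[where P="\<lambda>m. take m v \<in> A", OF ex])
    have "take m v \<in> cutA A"
      unfolding cutA_def
    proof (intro CollectI conjI ballI impI)
      show "take m v \<in> A" by (rule um)
      fix u assume u: "u \<in> A" "prefix u (take m v)"
      then have lu: "length u \<le> m" using ml by (metis length_take min.absorb2 prefix_length_le)
      have "u = take (length u) (take m v)" using u(2) by (metis append_eq_conv_conj prefixE)
      then have ut: "u = take (length u) v" using lu by (simp add: min.absorb1)
      then have "m \<le> length u" unfolding m_def using u(1) by (metis Least_le)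
      then have "length u = m" using lu by simp
      then show "u = take m v" using ut by simp
    qed
    moreover have "prefix (take m v) v" by (rule take_is_prefix)
    moreover have "v \<in> vertices F" using v sub by auto
    ultimately show "v \<in> above F (cutA A)" unfolding above_def by auto
  qed
qed

lemma cut_above:
  assumes "c \<subseteq> vertices F" and ac: "\<forall>u\<in>c. \<forall>v\<in>c. prefix u v \<longrightarrow> u = v"
  shows "cutA (above F c) = c"
proof
  show "cutA (above F c) \<subseteq> c"
  proof
    fix v assume "v \<in> cutA (above F c)"
    then have v: "v \<in> above F c" "\<forall>u\<in>above F c. prefix u v \<longrightarrow> u = v" unfolding cutA_def by auto
    then obtain u where u: "u \<in> c" "prefix u v" unfolding above_def by auto
    have "u \<in> above F c" using u assms(1) unfolding above_def by auto
    then show "v \<in> c" using v(2) u by auto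
  qed
next
  show "c \<subseteq> cutA (above F c)"
  proof
    fix v assume v: "v \<in> c"
    have "v \<in> above F c" using v assms(1) unfolding above_def by auto
    moreover have "u = v" if uu: "u \<in> above F c" and pu: "prefix u v" for u
    proof -
      obtain w where "w \<in> c" "prefix w u" using uu unfolding above_def by auto
      then have "w = v" using ac v pu by (meson prefix_order.trans)
      then show ?thesis using pu \<open>prefix w u\<close> by (auto dest: prefix_order.antisym)
    qed
    ultimately show "v \<in> cutA (above F c)" unfolding cutA_def by auto
  qed
qed

lemma is_vertex_single: "is_vertex F [i] \<longleftrightarrow> i < length F"
  by (auto split: ptree.split)

lemma is_vertex_hd: "is_vertex F (j # q) \<Longrightarrow> j < length F"
  by simp

lemma vertex_ne: "v \<in> vertices F \<Longrightarrow> v \<noteq> []"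
  unfolding vertices_def by auto

lemma above_all_roots:
  assumes c: "c \<subseteq> vertices F" and ac: "\<forall>u\<in>c. \<forall>v\<in>c. prefix u v \<longrightarrow> u = v"
    and all: "above F c = vertices F"
  shows "c = roots F"
proof
  show "roots F \<subseteq> c"
  proof
    fix r assume "r \<in> roots F"
    then obtain i where r: "r = [i]" "i < length F" unfolding roots_def by auto
    then have "r \<in> vertices F" unfolding vertices_def using is_vertex_single by auto
    then obtain u where "u \<in> c" "prefix u r" using all unfolding above_def by auto
    moreover have "u \<noteq> []" using \<open>u \<in> c\<close> c vertex_ne by auto
    ultimately have "u = r" using r by (metis prefix_Cons prefix_Nil)
    then show "r \<in> c" using \<open>u \<in> c\<close> by simp
  qed
  then show "c \<subseteq> roots F"
  proof -
    assume rc: "roots F \<subseteq> c"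
    show ?thesis
    proof
      fix v assume v: "v \<in> c"
      then obtain j q where vq: "v = j # q" using c vertex_ne by (metis neq_Nil_conv subsetD)
      then have "is_vertex F (j # q)" using v c unfolding vertices_def by auto
      then have "[j] \<in> roots F" unfolding roots_def by auto
      then have "[j] \<in> c" using rc by auto
      moreover have "prefix [j] v" using vq by simp
      ultimately have "[j] = v" using ac v by blast
      then show "v \<in> roots F" using \<open>[j] \<in> roots F\<close> by simp
    qed
  qed
qed

lemma above_roots: "above F (roots F) = vertices F"
proof -
  have "v \<in> above F (roots F)" if vv: "v \<in> vertices F" for v
  proof -
    obtain j q where vq: "v = j # q" using vv vertex_ne by (metis neq_Nil_conv)
    then have "is_vertex F (j # q)" using vv unfolding vertices_def by auto
    then have "[j] \<in> roots F" unfolding roots_def by auto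
    moreover have "prefix [j] v" using vq by simp
    ultimately show ?thesis using vv unfolding above_def by blast
  qed
  then show ?thesis unfolding above_def by auto
qed



lemma V_nonempty: "F \<noteq> [] \<Longrightarrow> V F \<noteq> []"
  by (cases F rule: splits.cases) (auto simp: V_def)

lemma card_take_V: "card (set (take k (V F))) = min k (length (V F))"
  using distinct_V[of F] by (simp add: distinct_card)

lemma A_sub: "set (take k (V F)) \<subseteq> vertices F"
  using vertices_V set_take_subset by metis

lemma above_cutA_take: "above F (cutA (set (take k (V F)))) = set (take k (V F))"
  by (rule above_cut[OF A_sub]) (use closed_take vertices_V in blast)

lemma antichain_cutA: "\<forall>u\<in>cutA A. \<forall>v\<in>cutA A. prefix u v \<longrightarrow> u = v"
  unfolding cutA_def by auto

lemma ladm_iff: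
  assumes F: "F \<noteq> []"
  shows "left_admissible F c \<longleftrightarrow> (\<exists>k\<in>{1..<length (V F)}. c = cutA (set (take k (V F))))"
proof
  assume LA: "left_admissible F c"
  then have adm: "c \<subseteq> vertices F" "c \<noteq> {}" "\<forall>u\<in>c. \<forall>v\<in>c. prefix u v \<longrightarrow> u = v" "c \<noteq> roots F"
    unfolding left_admissible_def admissible_def by auto
  from LA obtain ss k where ss: "distinct ss" "set ss = vertices F" "sorted_wrt geq_hl ss"
    "above F c = set (take k ss)" unfolding left_admissible_def by blast
  have "ss = V F"
    by (rule sorted_unique[OF ss(1) distinct_V _ ss(3) sorted_V])
       (use ss(2) vertices_V geq_hl_antisym in auto)
  define k' where "k' = min k (length (V F))"
  have tk: "set (take k ss) = set (take k' (V F))"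
    unfolding k'_def \<open>ss = V F\<close> by (simp add: min_def)
  have "c \<subseteq> above F c" using adm(1) unfolding above_def by auto
  then have "k' \<noteq> 0" using adm(2) ss(4) tk by auto
  moreover have "k' < length (V F)"
  proof (rule ccontr)
    assume "\<not> k' < length (V F)"
    then have "k' = length (V F)" unfolding k'_def by simp
    then have "above F c = vertices F" using ss(4) tk vertices_V by simp
    then have "c = roots F" using above_all_roots adm(1,3) by blast
    then show False using adm(4) by simp
  qed
  moreover have "c = cutA (set (take k' (V F)))"
    using cut_above[OF adm(1,3)] ss(4) tk by simp
  ultimately show "\<exists>k\<in>{1..<length (V F)}. c = cutA (set (take k (V F)))" by force
next
  assume "\<exists>k\<in>{1..<length (V F)}. c = cutA (set (take k (V F)))"
  then obtain k where k: "1 \<le> k" "k < length (V F)" and c: "c = cutA (set (take k (V F)))" by auto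
  have ab: "above F c = set (take k (V F))" using c above_cutA_take by simp
  have h1: "c \<subseteq> vertices F" using c A_sub unfolding cutA_def by auto
  have h2: "c \<noteq> {}"
  proof
    assume "c = {}"
    then have "set (take k (V F)) = {}" using ab unfolding above_def by auto
    then show False using card_take_V[of k F] k by simp
  qed
  have h4: "c \<noteq> roots F"
  proof
    assume "c = roots F"
    then have "set (take k (V F)) = set (V F)" using ab above_roots vertices_V by metis
    then show False using card_take_V[of k F] k distinct_V[of F] by (simp add: distinct_card)
  qed
  have h3: "\<forall>u\<in>c. \<forall>v\<in>c. prefix u v \<longrightarrow> u = v" using c antichain_cutA by simp
  have h5: "\<exists>ss k. distinct ss \<and> set ss = vertices F \<and> sorted_wrt geq_hl ss \<and>
            above F c = set (take k ss)"
    by (intro exI[of _ "V F"] exI[of _ k]) (simp add: ab distinct_V sorted_V vertices_V)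
  show "left_admissible F c"
    unfolding left_admissible_def admissible_def by (intro conjI h1 h2 h3 h4 h5)
qed

lemma Pc_cut: "k \<le> length (V F) \<Longrightarrow> Pc F (cutA (set (take k (V F)))) = fst (splits F ! k)"
  unfolding Pc_def above_cutA_take using restr_PR[of k "[]" 0 F] by (simp add: V_def)

lemma Rc_cut: "k \<le> length (V F) \<Longrightarrow> Rc F (cutA (set (take k (V F)))) = snd (splits F ! k)"
  unfolding Rc_def above_cutA_take using restr_PR[of k "[]" 0 F] by (simp add: V_def)

theorem proposition10:
  fixes D :: "forest \<Rightarrow> 'k::field HH" and F :: forest
  assumes "is_coproduct D"
    and "F \<noteq> []"
  shows "lin D (basis F) =
           (\<Sum>c\<in>Adm_l F. tens (basis (Pc F c)) (basis (Rc F c)))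
           + tens (basis F) hone + tens hone (basis F)"
proof -
  define n where "n = length (V F)"
  have n1: "1 \<le> n" using V_nonempty[OF assms(2)] unfolding n_def by (cases "V F") auto
  define cutk where "cutk k = cutA (set (take k (V F)))" for k
  have bij: "bij_betw cutk {1..<n} (Adm_l F)"
  proof (rule bij_betw_imageI)
    show "inj_on cutk {1..<n}"
    proof
      fix a b assume ab: "a \<in> {1..<n}" "b \<in> {1..<n}" "cutk a = cutk b"
      then have "set (take a (V F)) = set (take b (V F))"
        unfolding cutk_def by (metis above_cutA_take)
      then have "min a n = min b n" using card_take_V unfolding n_def by metis
      then show "a = b" using ab by simp
    qed
    show "cutk ` {1..<n} = Adm_l F"
      unfolding Adm_l_def cutk_def n_def using ladm_iff[OF assms(2)] by auto
  qed
  let ?g = "\<lambda>c. tens (basis (Pc F c)) (basis (Rc F c)) :: 'k HH"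
  have "(\<Sum>c\<in>Adm_l F. ?g c) = (\<Sum>k\<in>{1..<n}. ?g (cutk k))"
    using sum.reindex_bij_betw[OF bij, of ?g] by simp
  also have "\<dots> = (\<Sum>k\<in>{1..<n}. basis (splits F ! k))"
    by (rule sum.cong) (auto simp: cutk_def Pc_cut Rc_cut n_def)
  finally have S: "(\<Sum>c\<in>Adm_l F. ?g c) = (\<Sum>k\<in>{1..<n}. basis (splits F ! k))" .
  have ls: "length (splits F) = Suc n" unfolding n_def V_def by (rule len_splits)
  have sn: "splits F ! n = (F, [])" unfolding n_def V_def by (rule splits_last)
  have "lin D (basis F) = Phi F" using D_eq[OF assms(1)] .
  also have "\<dots> = (\<Sum>k<Suc n. basis (splits F ! k))"
    unfolding Phi_def using ls by (simp add: sum_list_sum_nth atLeast0LessThan)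
  also have "{..<Suc n} = insert 0 (insert n {1..<n})" using n1 by auto
  also have "(\<Sum>k\<in>insert 0 (insert n {1..<n}). basis (splits F ! k) :: 'k HH) =
      basis (splits F ! 0) + (basis (splits F ! n) + (\<Sum>k\<in>{1..<n}. basis (splits F ! k)))"
    using n1 by (simp add: sum.insert)
  also have "\<dots> = (\<Sum>k\<in>{1..<n}. basis (splits F ! k)) + tens (basis F) hone + tens hone (basis F)"
    using sn by (simp add: splits_0 hone_def ac_simps)
  also have "\<dots> = (\<Sum>c\<in>Adm_l F. ?g c) + tens (basis F) hone + tens hone (basis F)"
    by (simp only: S)
  finally show ?thesis .
qed


end
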